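(* Let $T$ be a tree with $n\ge 2$ vertices and let $(u,v)$ be an edge of $T$. Then $$\frac{F(T_v)}{F(T_u)}=\frac{|T_u(v)|}{|T_v(u)|}=\frac{|T_u(v)|}{n-|T_u(v)|}.$$
   Context: For a finite undirected graph $G=(V,E)$, a shelling of $G$ is a total ordering $\sigma(1),\ldots,\sigma(|E|)$ of $E$ such that for every $k$ the edges $\sigma(1),\ldots,\sigma(k)$ form a connected subgraph. For a tree $T$ and a vertex $v$, $T_v$ denotes $T$ rooted at $v$, and a shelling of $T_v$ is a shelling $\sigma$ of $T$ whose first edge $\sigma(1)$ is incident to $v$; $F(T_v)$ is the number of shellings of $T_v$. In $T_v$, a vertex $w$ is a descendant of $u$ if $u$ lies on the unique path from $v$ to $w$ (including $w=u$). $T_v(u)$ is the subtree of $T$ induced by all descendants of $u$ in $T_v$, and $|T_v(u)|$ is its number of vertices. *)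

theory Defs
  imports Complex_Main
begin

definition graph :: "'a set \<Rightarrow> 'a set set \<Rightarrow> bool" where
  "graph V E \<longleftrightarrow> finite V \<and> (\<forall>e\<in>E. \<exists>x y. x \<noteq> y \<and> e = {x, y} \<and> x \<in> V \<and> y \<in> V)"

definition adj :: "'a set set \<Rightarrow> 'a \<Rightarrow> 'a \<Rightarrow> bool" where
  "adj E x y \<longleftrightarrow> x \<noteq> y \<and> {x, y} \<in> E"

definition connected_graph :: "'a set \<Rightarrow> 'a set set \<Rightarrow> bool" where
  "connected_graph V E \<longleftrightarrow> V \<noteq> {} \<and> (\<forall>x\<in>V. \<forall>y\<in>V. (adj E)\<^sup>*\<^sup>* x y)"

definition is_path :: "'a set set \<Rightarrow> 'a list \<Rightarrow> bool" where
  "is_path E p \<longleftrightarrow> p \<noteq> [] \<and> distinct p \<and> (\<forall>i. Suc i < length p \<longrightarrow> adj E (p ! i) (p ! Suc i))"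

definition has_cycle :: "'a set set \<Rightarrow> bool" where
  "has_cycle E \<longleftrightarrow> (\<exists>p. is_path E p \<and> length p \<ge> 3 \<and> adj E (last p) (hd p))"

definition tree :: "'a set \<Rightarrow> 'a set set \<Rightarrow> bool" where
  "tree V E \<longleftrightarrow> graph V E \<and> connected_graph V E \<and> \<not> has_cycle E"

definition is_shelling :: "'a set set \<Rightarrow> 'a set list \<Rightarrow> bool" where
  "is_shelling E s \<longleftrightarrow> distinct s \<and> set s = E \<and>
     (\<forall>k. 1 \<le> k \<and> k \<le> length s \<longrightarrow>
        connected_graph (\<Union> (set (take k s))) (set (take k s)))"

text \<open>Shellings of the rooted tree T_v: first edge incident to v.\<close>
definition rooted_shellings :: "'a set set \<Rightarrow> 'a \<Rightarrow> 'a set list set" where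
  "rooted_shellings E v = {s. is_shelling E s \<and> s \<noteq> [] \<and> v \<in> hd s}"

definition F :: "'a set set \<Rightarrow> 'a \<Rightarrow> nat" where
  "F E v = card (rooted_shellings E v)"

definition descendants :: "'a set \<Rightarrow> 'a set set \<Rightarrow> 'a \<Rightarrow> 'a \<Rightarrow> 'a set" where
  "descendants V E v u = {w \<in> V. \<exists>p. is_path E p \<and> hd p = v \<and> last p = w \<and> u \<in> set p}"

text \<open>|T_v(u)|: number of vertices of the subtree induced by the descendants of u.\<close>
definition subtree_size :: "'a set \<Rightarrow> 'a set set \<Rightarrow> 'a \<Rightarrow> 'a \<Rightarrow> nat" where
  "subtree_size V E v u = card (descendants V E v u)"

end

theory Submission
  imports Defs
begin

fun goodW :: "'a set \<Rightarrow> 'a set list \<Rightarrow> bool" where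
  "goodW W [] = True"
| "goodW W (e # s) = (e \<inter> W \<noteq> {} \<and> goodW (W \<union> e) s)"

lemma goodW_append: "goodW W (s @ t) \<longleftrightarrow> goodW W s \<and> goodW (W \<union> \<Union>(set s)) t"
  by (induction s arbitrary: W) (auto simp: Un_assoc)

lemma goodW_nth: "goodW W s \<longleftrightarrow> (\<forall>k<length s. s ! k \<inter> (W \<union> \<Union>(set (take k s))) \<noteq> {})"
proof (induction s arbitrary: W)
  case Nil then show ?case by simp
next
  case (Cons e s)
  have "(\<forall>k<length (e#s). (e#s) ! k \<inter> (W \<union> \<Union>(set (take k (e#s)))) \<noteq> {}) \<longleftrightarrow>
        e \<inter> W \<noteq> {} \<and> (\<forall>k<length s. s ! k \<inter> ((W \<union> e) \<union> \<Union>(set (take k s))) \<noteq> {})"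
    by (simp add: All_less_Suc2 Un_assoc)
  then show ?case using Cons.IH[of "W \<union> e"] by simp
qed

lemma adj_sym: "adj E x y \<Longrightarrow> adj E y x"
  by (auto simp: adj_def insert_commute)

lemma rtc_sym: "(adj E)\<^sup>*\<^sup>* x y \<Longrightarrow> (adj E)\<^sup>*\<^sup>* y x"
  by (induction rule: rtranclp_induct) (auto intro: converse_rtranclp_into_rtranclp adj_sym)

lemma adj_mono: "adj H x y \<Longrightarrow> H \<subseteq> G \<Longrightarrow> adj G x y"
  by (auto simp: adj_def)

lemma rtc_mono: "(adj H)\<^sup>*\<^sup>* x y \<Longrightarrow> H \<subseteq> G \<Longrightarrow> (adj G)\<^sup>*\<^sup>* x y"
  by (induction rule: rtranclp_induct) (auto intro: rtranclp.rtrancl_into_rtrancl adj_mono)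

lemma rtc_trapped: "(adj G)\<^sup>*\<^sup>* a b \<Longrightarrow> a \<in> C \<Longrightarrow> (\<forall>f\<in>G. f \<inter> C \<noteq> {} \<longrightarrow> f \<subseteq> C) \<Longrightarrow> b \<in> C"
  by (induction rule: rtranclp_induct) (auto simp: adj_def)

definition ok2 :: "'a set set \<Rightarrow> bool" where
  "ok2 H \<longleftrightarrow> (\<forall>e\<in>H. \<exists>x y. x \<noteq> y \<and> e = {x,y})"

lemma conn_snoc:
  assumes c: "connected_graph (\<Union>(set P)) (set P)" and e: "e = {x,y}" "x \<noteq> y"
    and i: "e \<inter> \<Union>(set P) \<noteq> {}"
  shows "connected_graph (\<Union>(set (P @ [e]))) (set (P @ [e]))"
proof -
  let ?G = "set (P @ [e])"
  obtain z where z: "z \<in> e" "z \<in> \<Union>(set P)" using i by blast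
  have G: "set P \<subseteq> ?G" "e \<in> ?G" by auto
  have r: "(adj ?G)\<^sup>*\<^sup>* z w" if w: "w \<in> \<Union> ?G" for w
  proof (cases "w \<in> \<Union>(set P)")
    case True
    then have "(adj (set P))\<^sup>*\<^sup>* z w" using c z(2) unfolding connected_graph_def by blast
    then show ?thesis using rtc_mono[OF _ G(1)] by blast
  next
    case False
    then have "w \<in> e" using w by auto
    show ?thesis
    proof (cases "w = z")
      case True then show ?thesis by simp
    next
      case False
      then have "adj ?G z w" using \<open>w \<in> e\<close> z(1) e G(2) by (auto simp: adj_def insert_commute)
      then show ?thesis by blast
    qed
  qed
  show ?thesis unfolding connected_graph_def
  proof (intro conjI ballI)
    show "\<Union> ?G \<noteq> {}" using z G by blast
  next
    fix a b assume "a \<in> \<Union> ?G" "b \<in> \<Union> ?G"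
    then show "(adj ?G)\<^sup>*\<^sup>* a b" using r rtc_sym by (meson rtranclp_trans)
  qed
qed

lemma good_conn:
  assumes ok: "ok2 (set s)" and g: "goodW {r} s"
  shows "1 \<le> k \<Longrightarrow> k \<le> length s \<Longrightarrow> connected_graph (\<Union>(set (take k s))) (set (take k s))"
proof (induction k)
  case 0 then show ?case by simp
next
  case (Suc k)
  show ?case
  proof (cases "k = 0")
    case True
    have "s ! 0 \<in> set s" using Suc.prems by (auto intro: nth_mem)
    then obtain x y where xy: "x \<noteq> y" "s ! 0 = {x,y}" using ok unfolding ok2_def by blast
    have t: "take (Suc k) s = [s ! 0]" using True Suc.prems by (cases s) auto
    have "(adj {{x,y}})\<^sup>*\<^sup>* a b" if "a \<in> {x,y}" "b \<in> {x,y}" for a b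
      using that xy(1) by (cases "a = b") (auto simp: adj_def insert_commute intro!: r_into_rtranclp)
    then show ?thesis unfolding t connected_graph_def using xy by auto
  next
    case False
    have IH: "connected_graph (\<Union>(set (take k s))) (set (take k s))" using Suc False by simp
    have k: "k < length s" using Suc.prems by simp
    have t: "take (Suc k) s = take k s @ [s ! k]" using k by (simp add: take_Suc_conv_app_nth)
    obtain x y where xy: "x \<noteq> y" "s ! k = {x,y}" using ok k unfolding ok2_def by (meson nth_mem)
    have "s ! k \<inter> ({r} \<union> \<Union>(set (take k s))) \<noteq> {}" using g k goodW_nth by blast
    moreover have "r \<in> \<Union>(set (take k s))"
    proof -
      obtain e s' where s: "s = e # s'" using k by (cases s) auto
      have "r \<in> e" using g s by auto
      moreover have "e \<in> set (take k s)" using s False by (cases k) auto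
      ultimately show ?thesis by blast
    qed
    ultimately have "s ! k \<inter> \<Union>(set (take k s)) \<noteq> {}" by blast
    then show ?thesis unfolding t using conn_snoc[OF IH xy(2) xy(1)] by blast
  qed
qed

lemma shell_good:
  assumes sh: "is_shelling E s" and ok: "ok2 E" and r: "r \<in> hd s" and ne: "s \<noteq> []"
  shows "goodW {r} s"
  unfolding goodW_nth
proof (intro allI impI)
  fix k assume k: "k < length s"
  show "s ! k \<inter> ({r} \<union> \<Union>(set (take k s))) \<noteq> {}"
  proof (cases "k = 0")
    case True then show ?thesis using r ne by (simp add: hd_conv_nth)
  next
    case False
    show ?thesis
    proof
      assume D: "s ! k \<inter> ({r} \<union> \<Union>(set (take k s))) = {}"
      let ?G = "set (take (Suc k) s)"
      have c: "connected_graph (\<Union> ?G) ?G" using sh k unfolding is_shelling_def by auto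
      have G: "?G = insert (s ! k) (set (take k s))" using k by (simp add: take_Suc_conv_app_nth)
      have "s ! k \<in> E" using sh k unfolding is_shelling_def by auto
      then obtain x y where xy: "x \<noteq> y" "s ! k = {x,y}" using ok unfolding ok2_def by blast
      have "hd s \<in> ?G" using ne by (cases s) auto
      then have rG: "r \<in> \<Union> ?G" using r by blast
      have xG: "x \<in> \<Union> ?G" using G xy by auto
      have "(adj ?G)\<^sup>*\<^sup>* x r" using c rG xG unfolding connected_graph_def by blast
      moreover have "\<forall>f\<in>?G. f \<inter> s ! k \<noteq> {} \<longrightarrow> f \<subseteq> s ! k" using G D by auto
      ultimately have "r \<in> s ! k" using rtc_trapped[of ?G x r "s ! k"] xy by auto
      then show False using D by auto
    qed
  qed
qed

lemma rooted_char:
  assumes ok: "ok2 E" and ne: "E \<noteq> {}"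
  shows "rooted_shellings E r = {s. distinct s \<and> set s = E \<and> goodW {r} s}"
proof (intro set_eqI iffI)
  fix s assume "s \<in> rooted_shellings E r"
  then have "is_shelling E s" "s \<noteq> []" "r \<in> hd s" unfolding rooted_shellings_def by auto
  then show "s \<in> {s. distinct s \<and> set s = E \<and> goodW {r} s}"
    using shell_good[OF _ ok] unfolding is_shelling_def by auto
next
  fix s assume s: "s \<in> {s. distinct s \<and> set s = E \<and> goodW {r} s}"
  then have sne: "s \<noteq> []" using ne by auto
  then obtain e s' where es: "s = e # s'" by (cases s) auto
  have "r \<in> hd s" using s es by auto
  moreover have "is_shelling E s" unfolding is_shelling_def
    using s good_conn[of s r] ok by auto
  ultimately show "s \<in> rooted_shellings E r" using sne unfolding rooted_shellings_def by auto
qed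

lemma goodW_split:
  assumes "v \<in> W" "v \<in> P" "v \<in> Q" "P \<inter> Q \<subseteq> {v}" "\<forall>e\<in>X. e \<subseteq> P" "\<forall>e\<in>Y. e \<subseteq> Q"
    "set s \<subseteq> X \<union> Y" "X \<inter> Y = {}"
  shows "goodW W s \<longleftrightarrow> goodW (W \<inter> P) (filter (\<lambda>e. e \<in> X) s) \<and> goodW (W \<inter> Q) (filter (\<lambda>e. e \<in> Y) s)"
  using assms
proof (induction s arbitrary: W)
  case Nil then show ?case by simp
next
  case (Cons e s)
  have IH: "goodW (W \<union> e) s \<longleftrightarrow> goodW ((W \<union> e) \<inter> P) (filter (\<lambda>e. e \<in> X) s) \<and> goodW ((W \<union> e) \<inter> Q) (filter (\<lambda>e. e \<in> Y) s)"
    using Cons.prems by (intro Cons.IH) auto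
  show ?case
  proof (cases "e \<in> X")
    case True
    then have eY: "e \<notin> Y" using Cons.prems(8) by blast
    have eP: "e \<subseteq> P" using True Cons.prems(5) by blast
    have 1: "(W \<union> e) \<inter> P = W \<inter> P \<union> e" using eP by blast
    have 2: "(W \<union> e) \<inter> Q = W \<inter> Q" using eP Cons.prems(1,4) by blast
    have 3: "(e \<inter> W \<noteq> {}) = (e \<inter> (W \<inter> P) \<noteq> {})" using eP by blast
    show ?thesis using True eY IH 1 2 3 by simp
  next
    case False
    then have eY: "e \<in> Y" using Cons.prems(7) by auto
    have eP: "e \<subseteq> Q" using eY Cons.prems(6) by blast
    have 1: "(W \<union> e) \<inter> Q = W \<inter> Q \<union> e" using eP by blast
    have 2: "(W \<union> e) \<inter> P = W \<inter> P" using eP Cons.prems(1,4) by blast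
    have 3: "(e \<inter> W \<noteq> {}) = (e \<inter> (W \<inter> Q) \<noteq> {})" using eP by blast
    show ?thesis using False eY IH 1 2 3 by (simp add: conj_ac)
  qed
qed

lemma goodW_restrict: "\<forall>e\<in>set t. e \<subseteq> P \<Longrightarrow> goodW W t \<longleftrightarrow> goodW (W \<inter> P) t"
proof (induction t arbitrary: W)
  case (Cons e t)
  have "(W \<union> e) \<inter> P = W \<inter> P \<union> e" "(e \<inter> W \<noteq> {}) = (e \<inter> (W \<inter> P) \<noteq> {})" using Cons.prems by auto
  then show ?case using Cons.IH[of "W \<union> e"] Cons.prems by simp
qed simp

lemma finite_dlists: "finite X \<Longrightarrow> finite {xs. distinct xs \<and> set xs = X}"
  by (rule finite_subset[OF _ finite_lists_length_le[of X "card X"]]) (auto simp: distinct_card)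

lemma shuffle_filters:
  assumes XY: "X \<inter> Y = {}" and xs: "distinct xs" "set xs = X" and ys: "distinct ys" "set ys = Y"
    and s: "s \<in> shuffles xs ys"
  shows "distinct s" "set s = X \<union> Y" "filter (\<lambda>e. e \<in> X) s = xs" "filter (\<lambda>e. e \<in> Y) s = ys"
proof -
  have d: "set xs \<inter> set ys = {}" using xs ys XY by simp
  show "distinct s" using distinct_disjoint_shuffles[OF xs(1) ys(1) d s] .
  show "set s = X \<union> Y" using set_shuffles[OF s] xs ys by simp
  show "filter (\<lambda>e. e \<in> X) s = xs" using filter_shuffles_disjoint1(1)[OF d s] xs by simp
  show "filter (\<lambda>e. e \<in> Y) s = ys" using filter_shuffles_disjoint2(1)[OF d s] ys by simp
qed

lemma count_shuffle:
  assumes XY: "X \<inter> Y = {}" and SX: "SX \<subseteq> {xs. distinct xs \<and> set xs = X}"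
    and SY: "SY \<subseteq> {ys. distinct ys \<and> set ys = Y}"
    and fX: "finite X" and fY: "finite Y"
  shows "card {s. distinct s \<and> set s = X \<union> Y \<and> filter (\<lambda>e. e \<in> X) s \<in> SX \<and> filter (\<lambda>e. e \<in> Y) s \<in> SY}
       = card SX * card SY * ((card X + card Y) choose card X)"
proof -
  let ?S = "{s. distinct s \<and> set s = X \<union> Y \<and> filter (\<lambda>e. e \<in> X) s \<in> SX \<and> filter (\<lambda>e. e \<in> Y) s \<in> SY}"
  have eq: "?S = (\<Union>p\<in>SX \<times> SY. shuffles (fst p) (snd p))"
  proof (intro set_eqI iffI)
    fix s assume s: "s \<in> ?S"
    have "filter (\<lambda>e. \<not> e \<in> X) s = filter (\<lambda>e. e \<in> Y) s"
      using s XY by (intro filter_cong) auto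
    then have "s \<in> shuffles (filter (\<lambda>e. e \<in> X) s) (filter (\<lambda>e. e \<in> Y) s)"
      using partition_in_shuffles[of s "\<lambda>e. e \<in> X"] by simp
    then show "s \<in> (\<Union>p\<in>SX \<times> SY. shuffles (fst p) (snd p))" using s by force
  next
    fix s assume "s \<in> (\<Union>p\<in>SX \<times> SY. shuffles (fst p) (snd p))"
    then obtain xs ys where xs: "xs \<in> SX" and ys: "ys \<in> SY" and s: "s \<in> shuffles xs ys" by auto
    have sx: "distinct xs" "set xs = X" using xs SX by auto
    have sy: "distinct ys" "set ys = Y" using ys SY by auto
    show "s \<in> ?S" using shuffle_filters[OF XY sx sy s] xs ys by simp
  qed
  have fSX: "finite SX" using finite_subset[OF SX finite_dlists[OF fX]] .
  have fSY: "finite SY" using finite_subset[OF SY finite_dlists[OF fY]] .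
  have "card ?S = (\<Sum>p\<in>SX \<times> SY. card (shuffles (fst p) (snd p)))"
    unfolding eq
  proof (rule card_UN_disjoint)
    show "finite (SX \<times> SY)" using fSX fSY by simp
    show "\<forall>i\<in>SX \<times> SY. finite (shuffles (fst i) (snd i))" by simp
    show "\<forall>i\<in>SX \<times> SY. \<forall>j\<in>SX \<times> SY. i \<noteq> j \<longrightarrow> shuffles (fst i) (snd i) \<inter> shuffles (fst j) (snd j) = {}"
    proof (intro ballI impI)
      fix i j assume i: "i \<in> SX \<times> SY" and j: "j \<in> SX \<times> SY" and ij: "i \<noteq> j"
      show "shuffles (fst i) (snd i) \<inter> shuffles (fst j) (snd j) = {}"
      proof (rule ccontr)
        assume "shuffles (fst i) (snd i) \<inter> shuffles (fst j) (snd j) \<noteq> {}"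
        then obtain s where s1: "s \<in> shuffles (fst i) (snd i)" and s2: "s \<in> shuffles (fst j) (snd j)" by blast
        have a1: "distinct (fst i)" "set (fst i) = X" "distinct (snd i)" "set (snd i) = Y" using i SX SY by auto
        have a2: "distinct (fst j)" "set (fst j) = X" "distinct (snd j)" "set (snd j) = Y" using j SX SY by auto
        have "fst i = fst j" "snd i = snd j"
          using shuffle_filters[OF XY a1 s1] shuffle_filters[OF XY a2 s2] by auto
        then show False using ij by (simp add: prod_eq_iff)
      qed
    qed
  qed
  also have "\<dots> = (\<Sum>p\<in>SX \<times> SY. (card X + card Y) choose card X)"
  proof (rule sum.cong[OF refl])
    fix p assume p: "p \<in> SX \<times> SY"
    have a: "distinct (fst p)" "set (fst p) = X" "distinct (snd p)" "set (snd p) = Y" using p SX SY by auto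
    have "set (fst p) \<inter> set (snd p) = {}" using a XY by simp
    then have "card (shuffles (fst p) (snd p)) = (length (fst p) + length (snd p)) choose length (fst p)"
      by (rule card_disjoint_shuffles)
    then show "card (shuffles (fst p) (snd p)) = (card X + card Y) choose card X"
      using a distinct_card by metis
  qed
  also have "\<dots> = card SX * card SY * ((card X + card Y) choose card X)"
    by (simp add: card_cartesian_product)
  finally show ?thesis .
qed

lemma rtc_path:
  assumes "(adj H)\<^sup>*\<^sup>* x y" shows "\<exists>p. is_path H p \<and> hd p = x \<and> last p = y"
  using assms
proof (induction rule: rtranclp_induct)
  case base
  show ?case by (rule exI[of _ "[x]"]) (simp add: is_path_def)
next
  case (step y z)
  then obtain p where p: "is_path H p" "hd p = x" "last p = y" by blast
  have ne: "p \<noteq> []" using p(1) by (simp add: is_path_def)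
  show ?case
  proof (cases "z \<in> set p")
    case True
    then obtain i where i: "i < length p" "p ! i = z" by (meson in_set_conv_nth)
    let ?q = "take (Suc i) p"
    have "is_path H ?q" using p(1) i unfolding is_path_def by auto
    moreover have "hd ?q = x" using p(2) ne by (cases p) auto
    moreover have "last ?q = z" using i by (simp add: take_Suc_conv_app_nth)
    ultimately show ?thesis by blast
  next
    case False
    let ?q = "p @ [z]"
    have "is_path H ?q"
      unfolding is_path_def
    proof (intro conjI allI impI)
      show "?q \<noteq> []" by simp
      show "distinct ?q" using p(1) False unfolding is_path_def by simp
      fix j assume j: "Suc j < length ?q"
      show "adj H (?q ! j) (?q ! Suc j)"
      proof (cases "Suc j < length p")
        case True then show ?thesis using p(1) by (simp add: nth_append is_path_def)
      next
        case False
        then have "j = length p - 1" "Suc j = length p" using j by auto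
        then show ?thesis using step(2) p(3) ne by (simp add: nth_append last_conv_nth)
      qed
    qed
    moreover have "hd ?q = x" using p ne by auto
    moreover have "last ?q = z" by simp
    ultimately show ?thesis by blast
  qed
qed

lemma path_reach: "is_path H p \<Longrightarrow> i < length p \<Longrightarrow> (adj H)\<^sup>*\<^sup>* (hd p) (p ! i)"
proof (induction i)
  case 0 then show ?case by (simp add: hd_conv_nth is_path_def)
next
  case (Suc i)
  then have "(adj H)\<^sup>*\<^sup>* (hd p) (p ! i)" by simp
  moreover have "adj H (p ! i) (p ! Suc i)" using Suc.prems unfolding is_path_def by blast
  ultimately show ?case by (rule rtranclp.rtrancl_into_rtrancl)
qed

lemma path_mono: "is_path H p \<Longrightarrow> H \<subseteq> G \<Longrightarrow> is_path G p"
  by (auto simp: is_path_def adj_def)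

lemma tree_no_alt:
  assumes T: "tree V E" and FE: "H \<subseteq> E" and r: "(adj H)\<^sup>*\<^sup>* x y" and xy: "x \<noteq> y"
    and e: "{x,y} \<in> E" and nF: "{x,y} \<notin> H"
  shows False
proof -
  obtain p where p: "is_path H p" "hd p = x" "last p = y" using rtc_path[OF r] by blast
  have ne: "p \<noteq> []" using p(1) by (simp add: is_path_def)
  have "length p \<noteq> 1"
  proof
    assume "length p = 1" then have "hd p = last p" using ne by (cases p) auto
    then show False using p xy by simp
  qed
  moreover have "length p \<ge> 1" using ne by (cases p) auto
  ultimately have l2: "length p \<ge> 2" by linarith
  show False
  proof (cases "length p = 2")
    case True
    have "adj H (p ! 0) (p ! Suc 0)" using p(1) True unfolding is_path_def by auto
    moreover have "p ! 0 = x" using p(2) ne by (simp add: hd_conv_nth)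
    moreover have "p ! Suc 0 = y" using p(3) ne True by (simp add: last_conv_nth)
    ultimately show False using nF by (simp add: adj_def)
  next
    case False
    then have "length p \<ge> 3" using l2 by simp
    moreover have "is_path E p" using path_mono[OF p(1) FE] .
    moreover have "adj E (last p) (hd p)" using p xy e by (simp add: adj_def insert_commute)
    ultimately have "has_cycle E" unfolding has_cycle_def by blast
    then show False using T unfolding tree_def by blast
  qed
qed

lemma graph_ok2: "graph V E \<Longrightarrow> H \<subseteq> E \<Longrightarrow> ok2 H"
  unfolding graph_def ok2_def by blast

lemma graph_fin: "graph V E \<Longrightarrow> finite E"
proof -
  assume g: "graph V E"
  have "E \<subseteq> Pow V"
  proof
    fix e assume "e \<in> E"
    then obtain x y where "e = {x,y}" "x \<in> V" "y \<in> V" using g unfolding graph_def by meson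
    then show "e \<in> Pow V" by simp
  qed
  moreover have "finite (Pow V)" using g unfolding graph_def by simp
  ultimately show "finite E" by (rule finite_subset)
qed

lemma good_reach:
  assumes "ok2 (set t)" "goodW W t" "x \<in> W \<union> \<Union>(set t)"
  shows "\<exists>w\<in>W. (adj (set t))\<^sup>*\<^sup>* w x"
  using assms
proof (induction t arbitrary: x rule: rev_induct)
  case Nil then show ?case by auto
next
  case (snoc e t)
  have g: "goodW W t" "e \<inter> (W \<union> \<Union>(set t)) \<noteq> {}" using snoc.prems(2) by (auto simp: goodW_append)
  have ok: "ok2 (set t)" using snoc.prems(1) by (auto simp: ok2_def)
  have sub: "set t \<subseteq> set (t @ [e])" by auto
  show ?case
  proof (cases "x \<in> W \<union> \<Union>(set t)")
    case True
    then obtain w where w: "w \<in> W" "(adj (set t))\<^sup>*\<^sup>* w x" using snoc.IH[OF ok g(1)] by blast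
    show ?thesis using w(1) rtc_mono[OF w(2) sub] by blast
  next
    case False
    then have xe: "x \<in> e" using snoc.prems(3) by auto
    obtain z where z: "z \<in> e" "z \<in> W \<union> \<Union>(set t)" using g(2) by blast
    then obtain w where w: "w \<in> W" "(adj (set t))\<^sup>*\<^sup>* w z" using snoc.IH[OF ok g(1)] by blast
    have wz: "(adj (set (t @ [e])))\<^sup>*\<^sup>* w z" using rtc_mono[OF w(2) sub] .
    have "x \<noteq> z" using False z(2) by blast
    have eT: "e \<in> set (t @ [e])" by simp
    obtain a b where ab: "a \<noteq> b" "e = {a,b}" using snoc.prems(1) unfolding ok2_def by auto
    have "{z,x} = e" using \<open>x \<noteq> z\<close> xe z(1) ab by auto
    then have "adj (set (t @ [e])) z x" using \<open>x \<noteq> z\<close> eT by (simp add: adj_def)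
    then show ?thesis using w(1) wz by (meson rtranclp.rtrancl_into_rtrancl)
  qed
qed

lemma good_card:
  assumes T: "tree V E" and sub: "set t \<subseteq> E" and d: "distinct t" and g: "goodW {r} t"
  shows "card ({r} \<union> \<Union>(set t)) = Suc (length t)"
  using sub d g
proof (induction t rule: rev_induct)
  case Nil then show ?case by simp
next
  case (snoc e t)
  have g1: "goodW {r} t" and g2: "e \<inter> ({r} \<union> \<Union>(set t)) \<noteq> {}"
    using snoc.prems(3) by (auto simp: goodW_append)
  have IH: "card ({r} \<union> \<Union>(set t)) = Suc (length t)" using snoc g1 by auto
  have okE: "ok2 E" using T graph_ok2[of V E E] unfolding tree_def by blast
  obtain x y where xy: "x \<noteq> y" "e = {x,y}" using okE snoc.prems(1) unfolding ok2_def by auto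
  let ?U = "{r} \<union> \<Union>(set t)"
  have okt: "ok2 (set t)" using okE snoc.prems(1) by (auto simp: ok2_def)
  have finU: "finite ?U"
  proof -
    have "\<forall>f\<in>set t. finite f" using okt unfolding ok2_def by auto
    then show ?thesis by simp
  qed
  have reach: "(adj (set t))\<^sup>*\<^sup>* r z" if "z \<in> ?U" for z using good_reach[OF okt g1 that] by auto
  have nboth: "\<not> (x \<in> ?U \<and> y \<in> ?U)"
  proof
    assume "x \<in> ?U \<and> y \<in> ?U"
    then have "(adj (set t))\<^sup>*\<^sup>* x y" using reach rtc_sym rtranclp_trans by metis
    moreover have "{x,y} \<notin> set t" using snoc.prems(2) xy by auto
    moreover have "{x,y} \<in> E" using snoc.prems(1) xy by auto
    moreover have "set t \<subseteq> E" using snoc.prems(1) by auto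
    ultimately show False using tree_no_alt[OF T _ _ xy(1)] by blast
  qed
  have "\<exists>z. z \<notin> ?U \<and> ?U \<union> e = insert z ?U"
  proof (cases "x \<in> ?U")
    case True
    then have "y \<notin> ?U" using nboth by blast
    then show ?thesis using True xy(2) by (intro exI[of _ y]) blast
  next
    case False
    then have "y \<in> ?U" using g2 xy(2) by blast
    then show ?thesis using False xy(2) by (intro exI[of _ x]) blast
  qed
  then obtain z where z: "z \<notin> ?U" "?U \<union> e = insert z ?U" by blast
  have "{r} \<union> \<Union>(set (t @ [e])) = ?U \<union> e" by auto
  then show ?case using z finU IH by simp
qed

lemma reach_remove:
  assumes "(adj H)\<^sup>*\<^sup>* a b" "a \<in> W'" "f \<subseteq> W'"
  shows "\<exists>w\<in>W'. (adj (H - {f}))\<^sup>*\<^sup>* w b"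
  using assms
proof (induction rule: rtranclp_induct)
  case base then show ?case by blast
next
  case (step b c)
  then obtain w where w: "w \<in> W'" "(adj (H - {f}))\<^sup>*\<^sup>* w b" by blast
  show ?case
  proof (cases "{b,c} = f")
    case True then have "c \<in> W'" using step.prems by blast
    then show ?thesis by blast
  next
    case False
    then have "adj (H - {f}) b c" using step.hyps(2) by (auto simp: adj_def)
    then show ?thesis using w by (meson rtranclp.rtrancl_into_rtrancl)
  qed
qed

lemma ex_good:
  assumes "finite H" "ok2 H" "\<forall>x\<in>\<Union>H. \<exists>w\<in>W. (adj H)\<^sup>*\<^sup>* w x"
  shows "\<exists>t. distinct t \<and> set t = H \<and> goodW W t"
  using assms
proof (induction H arbitrary: W rule: finite_psubset_induct)
  case (psubset H)
  show ?case
  proof (cases "H = {}")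
    case True then show ?thesis by (intro exI[of _ "[]"]) simp
  next
    case False
    then obtain e where e: "e \<in> H" by blast
    then obtain x y where xy: "x \<noteq> y" "e = {x,y}" using psubset.prems(1) unfolding ok2_def by blast
    have "x \<in> \<Union>H" using e xy by blast
    then obtain w where w: "w \<in> W" "(adj H)\<^sup>*\<^sup>* w x" using psubset.prems(2) by blast
    have "\<exists>f\<in>H. f \<inter> W \<noteq> {}"
    proof (cases "w = x")
      case True then have "x \<in> e \<inter> W" using w(1) xy by auto
      then show ?thesis using e by (intro bexI[of _ e]) auto
    next
      case False
      then obtain z where "adj H w z" using w(2) by (metis converse_rtranclpE)
      then have "{w,z} \<in> H" "w \<in> {w,z} \<inter> W" using w(1) unfolding adj_def by auto
      then show ?thesis by (intro bexI[of _ "{w,z}"]) auto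
    qed
    then obtain f where f: "f \<in> H" "f \<inter> W \<noteq> {}" by blast
    let ?H = "H - {f}"
    have ps: "?H \<subset> H" using f by blast
    have ok: "ok2 ?H" using psubset.prems(1) by (auto simp: ok2_def)
    have R: "\<forall>x\<in>\<Union>?H. \<exists>w\<in>W \<union> f. (adj ?H)\<^sup>*\<^sup>* w x"
    proof
      fix x assume "x \<in> \<Union>?H"
      then have "x \<in> \<Union>H" by blast
      then obtain w where "w \<in> W" "(adj H)\<^sup>*\<^sup>* w x" using psubset.prems(2) by blast
      then show "\<exists>w\<in>W \<union> f. (adj ?H)\<^sup>*\<^sup>* w x" using reach_remove[of H w x "W \<union> f" f] by blast
    qed
    obtain t where t: "distinct t" "set t = ?H" "goodW (W \<union> f) t" using psubset.IH[OF ps ok R] by blast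
    show ?thesis
      apply (rule exI[of _ "f # t"]) using t f by auto
  qed
qed

definition side :: "'a set set \<Rightarrow> 'a \<Rightarrow> 'a \<Rightarrow> 'a set" where
  "side E u v = {x. (adj (E - {{u,v}}))\<^sup>*\<^sup>* u x}"

definition sedges :: "'a set set \<Rightarrow> 'a \<Rightarrow> 'a \<Rightarrow> 'a set set" where
  "sedges E u v = {e \<in> E - {{u,v}}. e \<subseteq> side E u v}"

definition GS :: "'a set set \<Rightarrow> 'a \<Rightarrow> 'a \<Rightarrow> 'a set list set" where
  "GS E u v = {t. distinct t \<and> set t = sedges E u v \<and> goodW {u} t}"

lemma rtc_V:
  assumes g: "graph V E" and HE: "H \<subseteq> E" and r: "(adj H)\<^sup>*\<^sup>* a b" and a: "a \<in> V"
  shows "b \<in> V"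
  using r
proof (induction rule: rtranclp_induct)
  case base then show ?case using a by simp
next
  case (step y z)
  then have "{y,z} \<in> E" using HE unfolding adj_def by auto
  then obtain p q where "{y,z} = {p,q}" "p \<in> V" "q \<in> V" using g unfolding graph_def by meson
  then show ?case by (auto simp: doubleton_eq_iff)
qed

lemma side_step: "y \<in> side E u v \<Longrightarrow> adj (E - {{u,v}}) y z \<Longrightarrow> z \<in> side E u v"
  unfolding side_def by (simp add: rtranclp.rtrancl_into_rtrancl)

context
  fixes V :: "'a set" and E :: "'a set set" and u v :: 'a
  assumes T: "tree V E" and e0: "{u,v} \<in> E"
begin

lemma Gr: "graph V E" using T unfolding tree_def by blast

lemma uv: "u \<noteq> v" "u \<in> V" "v \<in> V"
proof -
  obtain x y where "x \<noteq> y" "{u,v} = {x,y}" "x \<in> V" "y \<in> V" using Gr e0 unfolding graph_def by meson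
  then show "u \<noteq> v" "u \<in> V" "v \<in> V" by (auto simp: doubleton_eq_iff)
qed

lemma Esym: "E - {{v,u}} = E - {{u,v}}" by (simp add: insert_commute)

lemma side_sym: "side E v u = {x. (adj (E - {{u,v}}))\<^sup>*\<^sup>* v x}"
  unfolding side_def using Esym by simp

lemma side_step2: "y \<in> side E v u \<Longrightarrow> adj (E - {{u,v}}) y z \<Longrightarrow> z \<in> side E v u"
  using side_step[of y E v u z] Esym by simp

lemma side_V: "side E u v \<subseteq> V" "side E v u \<subseteq> V"
  using rtc_V[OF Gr, of "E - {{u,v}}" u] rtc_V[OF Gr, of "E - {{u,v}}" v] uv
  unfolding side_def Esym by auto

lemma v_notin: "v \<notin> side E u v"
proof
  assume "v \<in> side E u v"
  then have "(adj (E - {{u,v}}))\<^sup>*\<^sup>* u v" unfolding side_def by simp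
  then show False using tree_no_alt[OF T _ _ uv(1) e0] by blast
qed

lemma side_disj: "side E u v \<inter> side E v u = {}"
proof (rule ccontr)
  assume "side E u v \<inter> side E v u \<noteq> {}"
  then obtain x where x: "x \<in> side E u v" "x \<in> side E v u" by blast
  have "(adj (E - {{u,v}}))\<^sup>*\<^sup>* u x" using x(1) unfolding side_def by simp
  moreover have "(adj (E - {{u,v}}))\<^sup>*\<^sup>* v x" using x(2) side_sym by simp
  ultimately have "(adj (E - {{u,v}}))\<^sup>*\<^sup>* u v" using rtc_sym rtranclp_trans by metis
  then show False using v_notin unfolding side_def by simp
qed

lemma side_union: "side E u v \<union> side E v u = V"
proof
  show "side E u v \<union> side E v u \<subseteq> V" using side_V by blast
next
  show "V \<subseteq> side E u v \<union> side E v u"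
  proof
    fix x assume x: "x \<in> V"
    have "(adj E)\<^sup>*\<^sup>* u x" using T x uv unfolding tree_def connected_graph_def by blast
    then show "x \<in> side E u v \<union> side E v u"
    proof (induction rule: rtranclp_induct)
      case base then show ?case unfolding side_def by simp
    next
      case (step y z)
      show ?case
      proof (cases "{y,z} = {u,v}")
        case True
        then have "z = u \<or> z = v" by (auto simp: doubleton_eq_iff)
        then show ?thesis unfolding side_def side_sym by auto
      next
        case False
        then have a: "adj (E - {{u,v}}) y z" using step.hyps(2) by (auto simp: adj_def)
        show ?thesis using step.IH side_step[OF _ a] side_step2[OF _ a] by blast
      qed
    qed
  qed
qed

lemma finA: "finite (side E u v)" "finite (side E v u)"
  using side_V Gr finite_subset unfolding graph_def by metis+

lemma sedges_cover: "E - {{u,v}} = sedges E u v \<union> sedges E v u"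
proof
  show "sedges E u v \<union> sedges E v u \<subseteq> E - {{u,v}}" unfolding sedges_def Esym by blast
next
  show "E - {{u,v}} \<subseteq> sedges E u v \<union> sedges E v u"
  proof
    fix e assume e: "e \<in> E - {{u,v}}"
    then obtain x y where xy: "x \<noteq> y" "e = {x,y}" "x \<in> V" using Gr unfolding graph_def by blast
    have a: "adj (E - {{u,v}}) x y" "adj (E - {{u,v}}) y x" using e xy by (auto simp: adj_def insert_commute)
    have "x \<in> side E u v \<or> x \<in> side E v u" using side_union xy(3) by blast
    then show "e \<in> sedges E u v \<union> sedges E v u"
    proof
      assume "x \<in> side E u v"
      then have "y \<in> side E u v" using side_step[OF _ a(1)] by blast
      then show ?thesis using \<open>x \<in> side E u v\<close> e xy unfolding sedges_def by blast
    next
      assume "x \<in> side E v u"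
      then have "y \<in> side E v u" using side_step2[OF _ a(1)] by blast
      then show ?thesis using \<open>x \<in> side E v u\<close> e xy Esym unfolding sedges_def by blast
    qed
  qed
qed

lemma sedges_sub: "sedges E u v \<subseteq> E - {{u,v}}" unfolding sedges_def by blast

lemma side_reach: "x \<in> side E u v \<Longrightarrow> (adj (sedges E u v))\<^sup>*\<^sup>* u x"
proof -
  assume "x \<in> side E u v"
  then have "(adj (E - {{u,v}}))\<^sup>*\<^sup>* u x" unfolding side_def by simp
  then show ?thesis
  proof (induction rule: rtranclp_induct)
    case base then show ?case by simp
  next
    case (step y z)
    have yz: "y \<in> side E u v" "z \<in> side E u v"
      using step.hyps rtranclp.rtrancl_into_rtrancl[OF step.hyps(1) step.hyps(2)] unfolding side_def by auto
    have "{y,z} \<in> sedges E u v" using step.hyps(2) yz unfolding adj_def sedges_def by auto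
    then have "adj (sedges E u v) y z" using step.hyps(2) unfolding adj_def by auto
    then show ?case using step.IH by (meson rtranclp.rtrancl_into_rtrancl)
  qed
qed

lemma side_eq: "{u} \<union> \<Union>(sedges E u v) = side E u v"
proof
  show "{u} \<union> \<Union>(sedges E u v) \<subseteq> side E u v" unfolding sedges_def side_def by auto
next
  show "side E u v \<subseteq> {u} \<union> \<Union>(sedges E u v)"
  proof
    fix x assume x: "x \<in> side E u v"
    show "x \<in> {u} \<union> \<Union>(sedges E u v)"
    proof (cases "x = u")
      case False
      have "(adj (sedges E u v))\<^sup>*\<^sup>* u x" using side_reach[OF x] .
      then obtain y where "adj (sedges E u v) y x" using False by (metis rtranclp.cases)
      then show ?thesis unfolding adj_def by auto
    qed simp
  qed
qed

lemma GS_card: "card (side E u v) = Suc (card (sedges E u v))" "GS E u v \<noteq> {}"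
proof -
  have fin: "finite (sedges E u v)" using graph_fin[OF Gr] sedges_sub finite_subset by blast
  have ok: "ok2 (sedges E u v)" using graph_ok2[OF Gr] sedges_sub by blast
  have "\<forall>x\<in>\<Union>(sedges E u v). \<exists>w\<in>{u}. (adj (sedges E u v))\<^sup>*\<^sup>* w x"
    using side_reach side_eq by blast
  then obtain t where t: "distinct t" "set t = sedges E u v" "goodW {u} t" using ex_good[OF fin ok] by blast
  then show "GS E u v \<noteq> {}" unfolding GS_def by blast
  have "card ({u} \<union> \<Union>(set t)) = Suc (length t)"
    using good_card[OF T _ t(1) t(3)] t(2) sedges_sub by blast
  then show "card (side E u v) = Suc (card (sedges E u v))"
    using side_eq t distinct_card by metis
qed

lemma desc: "descendants V E v u = side E u v"
proof
  show "side E u v \<subseteq> descendants V E v u"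
  proof
    fix x assume x: "x \<in> side E u v"
    then have ux: "(adj (E - {{u,v}}))\<^sup>*\<^sup>* u x" unfolding side_def by simp
    obtain p where p: "is_path (E - {{u,v}}) p" "hd p = u" "last p = x" using rtc_path[OF ux] by blast
    have ne: "p \<noteq> []" using p(1) unfolding is_path_def by simp
    have vp: "v \<notin> set p"
    proof
      assume "v \<in> set p"
      then obtain i where "i < length p" "p ! i = v" by (meson in_set_conv_nth)
      then have "(adj (E - {{u,v}}))\<^sup>*\<^sup>* u v" using path_reach[OF p(1)] p(2) by metis
      then show False using v_notin unfolding side_def by simp
    qed
    have "is_path E (v # p)"
      unfolding is_path_def
    proof (intro conjI allI impI)
      show "v # p \<noteq> []" by simp
      show "distinct (v # p)" using vp p(1) unfolding is_path_def by simp
      fix i assume i: "Suc i < length (v # p)"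
      show "adj E ((v # p) ! i) ((v # p) ! Suc i)"
      proof (cases i)
        case 0
        have "p ! 0 = u" using p(2) ne by (simp add: hd_conv_nth)
        then show ?thesis using 0 e0 uv(1) by (simp add: adj_def insert_commute)
      next
        case (Suc j)
        then have "adj (E - {{u,v}}) (p ! j) (p ! Suc j)" using p(1) i unfolding is_path_def by auto
        then show ?thesis using Suc by (simp add: adj_def)
      qed
    qed
    moreover have "last (v # p) = x" using p(3) ne by simp
    moreover have "u \<in> set (v # p)" using p(2) ne hd_in_set by fastforce
    moreover have "x \<in> V" using x side_V by blast
    ultimately show "x \<in> descendants V E v u" unfolding descendants_def by force
  qed
next
  show "descendants V E v u \<subseteq> side E u v"
  proof
    fix w assume "w \<in> descendants V E v u"
    then obtain p where p: "is_path E p" "hd p = v" "last p = w" "u \<in> set p"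
      unfolding descendants_def by blast
    have ne: "p \<noteq> []" and dp: "distinct p" using p(1) unfolding is_path_def by auto
    obtain j where j: "j < length p" "p ! j = u" using p(4) by (meson in_set_conv_nth)
    have p0: "p ! 0 = v" using p(2) ne by (simp add: hd_conv_nth)
    have j0: "j > 0" using j p0 uv(1) by (cases j) auto
    have R: "j + d < length p \<Longrightarrow> (adj (E - {{u,v}}))\<^sup>*\<^sup>* u (p ! (j + d))" for d
    proof (induction d)
      case 0 then show ?case using j by simp
    next
      case (Suc d)
      then have IH: "(adj (E - {{u,v}}))\<^sup>*\<^sup>* u (p ! (j + d))" by simp
      have a: "adj E (p ! (j + d)) (p ! Suc (j + d))" using p(1) Suc.prems unfolding is_path_def by auto
      have l1: "j + d < length p" "0 < length p" using Suc.prems by auto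
      have n1: "p ! (j + d) \<noteq> v" using p0 j0 nth_eq_iff_index_eq[OF dp l1] by auto
      have n2: "p ! Suc (j + d) \<noteq> v" using p0 Suc.prems nth_eq_iff_index_eq[OF dp _ l1(2), of "Suc (j+d)"] by auto
      have "{p ! (j + d), p ! Suc (j + d)} \<noteq> {u,v}" using n1 n2 by (auto simp: doubleton_eq_iff)
      then have "adj (E - {{u,v}}) (p ! (j + d)) (p ! Suc (j + d))" using a by (auto simp: adj_def)
      then show ?case using IH by (simp add: rtranclp.rtrancl_into_rtrancl)
    qed
    have "length p - 1 = j + (length p - 1 - j)" using j by simp
    then have "(adj (E - {{u,v}}))\<^sup>*\<^sup>* u (p ! (length p - 1))" using R[of "length p - 1 - j"] j by simp
    then show "w \<in> side E u v" using p(3) ne unfolding side_def by (simp add: last_conv_nth)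
  qed
qed

end

context
  fixes V :: "'a set" and E :: "'a set set" and u v :: 'a
  assumes T: "tree V E" and e0: "{u,v} \<in> E"
begin

lemma basics:
  shows "u \<in> side E u v" "v \<in> side E v u" "side E u v \<inter> side E v u = {}"
    "v \<notin> side E u v" "u \<notin> side E v u"
    "\<forall>e\<in>sedges E u v. e \<subseteq> side E u v" "\<forall>e\<in>sedges E v u. e \<subseteq> side E v u"
    "{u,v} \<notin> sedges E u v" "{u,v} \<notin> sedges E v u"
    "sedges E u v \<inter> sedges E v u = {}"
    "E = insert {u,v} (sedges E u v \<union> sedges E v u)"
    "finite (sedges E u v)" "finite (sedges E v u)"
proof -
  show uA: "u \<in> side E u v" unfolding side_def by simp
  show vB: "v \<in> side E v u" unfolding side_def by simp
  show AB: "side E u v \<inter> side E v u = {}" using side_disj[OF T e0] .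
  show vA: "v \<notin> side E u v" using v_notin[OF T e0] .
  show uB: "u \<notin> side E v u" using uA AB by blast
  show EA: "\<forall>e\<in>sedges E u v. e \<subseteq> side E u v" unfolding sedges_def by blast
  show EB: "\<forall>e\<in>sedges E v u. e \<subseteq> side E v u" unfolding sedges_def by blast
  show "{u,v} \<notin> sedges E u v" using sedges_sub[OF T e0] by blast
  show "{u,v} \<notin> sedges E v u" using EB uB by blast
  have ok: "ok2 E" using graph_ok2[OF Gr[OF T e0]] by blast
  show "sedges E u v \<inter> sedges E v u = {}"
  proof (rule ccontr)
    assume "sedges E u v \<inter> sedges E v u \<noteq> {}"
    then obtain e where e: "e \<in> sedges E u v" "e \<in> sedges E v u" by blast
    then have "e \<subseteq> side E u v \<inter> side E v u" using EA EB by blast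
    moreover have "e \<in> E" using e sedges_sub[OF T e0] by blast
    then obtain x y where "e = {x,y}" using ok unfolding ok2_def by blast
    ultimately show False using AB by blast
  qed
  show "E = insert {u,v} (sedges E u v \<union> sedges E v u)" using sedges_cover[OF T e0] e0 by blast
  have "finite E" using graph_fin[OF Gr[OF T e0]] .
  then show "finite (sedges E u v)" "finite (sedges E v u)" using sedges_sub[OF T e0] sedges_cover[OF T e0]
    by (auto intro: finite_subset)
qed

lemma card_E: "card E = Suc (card (sedges E u v) + card (sedges E v u))"
proof -
  have "card E = card (insert {u,v} (sedges E u v \<union> sedges E v u))" using basics(11) by simp
  also have "\<dots> = Suc (card (sedges E u v \<union> sedges E v u))"
    using basics(8,9,12,13) by simp
  also have "\<dots> = Suc (card (sedges E u v) + card (sedges E v u))"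
    using basics(10,12,13) by (simp add: card_Un_disjoint)
  finally show ?thesis .
qed

lemma count_root:
  "card {s. distinct s \<and> set s = E \<and> goodW {v} s}
     = card (GS E u v) * card (GS E v u) * (card E choose Suc (card (sedges E u v)))"
proof -
  let ?A = "side E u v" and ?B = "side E v u" and ?EA = "sedges E u v" and ?EB = "sedges E v u"
  let ?e = "{u,v}"
  let ?X = "insert ?e ?EA" and ?P = "insert v ?A"
  let ?SX = "{xs. distinct xs \<and> set xs = ?X \<and> goodW {v} xs}"
  note b = basics
  have EX: "E = ?X \<union> ?EB" using b(11) by blast
  have XY: "?X \<inter> ?EB = {}" using b(9,10) by blast
  have PQ: "?P \<inter> ?B \<subseteq> {v}" using b(3) by blast
  have XP: "\<forall>e\<in>?X. e \<subseteq> ?P" using b(1,6) by blast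
  have vP: "{v} \<inter> ?P = {v}" and vQ: "{v} \<inter> ?B = {v}" using b(2) by auto
  have eq: "{s. distinct s \<and> set s = E \<and> goodW {v} s}
     = {s. distinct s \<and> set s = ?X \<union> ?EB \<and> filter (\<lambda>e. e \<in> ?X) s \<in> ?SX \<and> filter (\<lambda>e. e \<in> ?EB) s \<in> GS E v u}"
  proof (intro set_eqI)
    fix s
    show "s \<in> {s. distinct s \<and> set s = E \<and> goodW {v} s} \<longleftrightarrow>
      s \<in> {s. distinct s \<and> set s = ?X \<union> ?EB \<and> filter (\<lambda>e. e \<in> ?X) s \<in> ?SX \<and> filter (\<lambda>e. e \<in> ?EB) s \<in> GS E v u}"
    proof (cases "distinct s \<and> set s = ?X \<union> ?EB")
      case True
      have sp: "goodW {v} s \<longleftrightarrow> goodW {v} (filter (\<lambda>e. e \<in> ?X) s) \<and> goodW {v} (filter (\<lambda>e. e \<in> ?EB) s)"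
        using goodW_split[of v "{v}" ?P ?B ?X ?EB s] PQ XP b(2,7) True XY vP vQ by simp
      have "set (filter (\<lambda>e. e \<in> ?X) s) = ?X" "set (filter (\<lambda>e. e \<in> ?EB) s) = ?EB" using True by auto
      then show ?thesis using True sp EX unfolding GS_def by auto
    next
      case False then show ?thesis using EX by auto
    qed
  qed
  have finX: "finite ?X" using b(12) by simp
  have c1: "card {s. distinct s \<and> set s = E \<and> goodW {v} s} = card ?SX * card (GS E v u) * ((card ?X + card ?EB) choose card ?X)"
    unfolding eq by (rule count_shuffle[OF XY _ _ finX b(13)]) (auto simp: GS_def)
  have cX: "card ?X = Suc (card ?EA)" using b(8,12) by simp
  have cXE: "card ?X + card ?EB = card E" using cX card_E by simp
  have rest: "goodW ({v} \<union> ?e) t \<longleftrightarrow> goodW {u} t" if "set t = ?EA" for t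
  proof -
    have "goodW ({v} \<union> ?e) t \<longleftrightarrow> goodW (({v} \<union> ?e) \<inter> ?A) t"
      using goodW_restrict[of t ?A] b(6) that by blast
    moreover have "({v} \<union> ?e) \<inter> ?A = {u}" using b(1,4) by auto
    ultimately show ?thesis by simp
  qed
  have SXeq: "?SX = (#) ?e ` GS E u v"
  proof
    show "?SX \<subseteq> (#) ?e ` GS E u v"
    proof
      fix xs assume xs: "xs \<in> ?SX"
      then have "xs \<noteq> []" by auto
      then obtain f t where ft: "xs = f # t" by (cases xs) auto
      have fX: "f \<in> ?X" using xs ft by auto
      have vf: "v \<in> f" using xs ft by auto
      have fe: "f = ?e"
      proof (rule ccontr)
        assume "f \<noteq> ?e"
        then have "f \<in> ?EA" using fX by blast
        then show False using b(4,6) vf by blast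
      qed
      have d: "distinct t" "?e \<notin> set t" using xs ft fe by auto
      have "insert ?e (set t) = insert ?e ?EA" using xs ft fe by auto
      then have st: "set t = ?EA" using d(2) b(8) by (simp add: insert_ident)
      have "goodW ({v} \<union> ?e) t" using xs ft fe by simp
      then have "goodW {u} t" using rest[OF st] by simp
      then have "t \<in> GS E u v" using d st unfolding GS_def by blast
      then show "xs \<in> (#) ?e ` GS E u v" using ft fe by blast
    qed
  next
    show "(#) ?e ` GS E u v \<subseteq> ?SX"
    proof
      fix xs assume "xs \<in> (#) ?e ` GS E u v"
      then obtain t where t: "t \<in> GS E u v" "xs = ?e # t" by blast
      have st: "set t = ?EA" "distinct t" "goodW {u} t" using t(1) unfolding GS_def by auto
      have "?e \<notin> set t" using st b(8) by simp
      moreover have "goodW ({v} \<union> ?e) t" using rest[OF st(1)] st(3) by simp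
      ultimately show "xs \<in> ?SX" using t st by auto
    qed
  qed
  have cS: "card ?SX = card (GS E u v)" unfolding SXeq by (rule card_image) simp
  have "card {s. distinct s \<and> set s = E \<and> goodW {v} s} = card ?SX * card (GS E v u) * (card E choose card ?X)"
    using c1 by (simp only: cXE)
  then show ?thesis by (simp only: cS cX)
qed

end

theorem corollary3p5:
  fixes V :: "'a set" and E :: "'a set set" and u v :: 'a and n :: nat
  assumes "tree V E"
    and "card V = n" and "n \<ge> 2"
    and "{u, v} \<in> E"
  shows "real (F E v) / real (F E u)
           = real (subtree_size V E u v) / real (subtree_size V E v u)
       \<and> real (subtree_size V E u v) / real (subtree_size V E v u)
           = real (subtree_size V E u v) / (real n - real (subtree_size V E u v))"
proof -
  note T = assms(1) and e0 = assms(4)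
  have e0': "{v,u} \<in> E" using e0 by (simp add: insert_commute)
  have okE: "ok2 E" using graph_ok2[OF Gr[OF T e0]] by blast
  have Ene: "E \<noteq> {}" using e0 by blast
  define \<alpha> where "\<alpha> = card (sedges E u v)"
  define \<beta> where "\<beta> = card (sedges E v u)"
  define GA where "GA = card (GS E u v)"
  define GB where "GB = card (GS E v u)"
  have Fv: "F E v = GA * GB * (card E choose Suc \<alpha>)"
    unfolding F_def rooted_char[OF okE Ene] GA_def GB_def \<alpha>_def using count_root[OF T e0] .
  have Fu: "F E u = GB * GA * (card E choose Suc \<beta>)"
    unfolding F_def rooted_char[OF okE Ene] GA_def GB_def \<beta>_def using count_root[OF T e0'] .
  have cE: "card E = Suc (\<alpha> + \<beta>)" using card_E[OF T e0] unfolding \<alpha>_def \<beta>_def .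
  have sa: "subtree_size V E v u = Suc \<alpha>"
    unfolding subtree_size_def desc[OF T e0] \<alpha>_def using GS_card(1)[OF T e0] .
  have sb: "subtree_size V E u v = Suc \<beta>"
    unfolding subtree_size_def desc[OF T e0'] \<beta>_def using GS_card(1)[OF T e0'] .
  have GApos: "GA > 0"
  proof -
    have "finite (GS E u v)"
      using finite_subset[OF _ finite_dlists[OF basics(12)[OF T e0]], of "GS E u v"] unfolding GS_def by blast
    then show ?thesis using GS_card(2)[OF T e0] unfolding GA_def by (simp add: card_gt_0_iff)
  qed
  have GBpos: "GB > 0"
  proof -
    have "finite (GS E v u)"
      using finite_subset[OF _ finite_dlists[OF basics(13)[OF T e0]], of "GS E v u"] unfolding GS_def by blast
    then show ?thesis using GS_card(2)[OF T e0'] unfolding GB_def by (simp add: card_gt_0_iff)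
  qed
  have sym: "(Suc (\<alpha> + \<beta>) choose Suc \<beta>) = (Suc (\<alpha> + \<beta>) choose \<alpha>)"
    using binomial_symmetric[of "Suc \<beta>" "Suc (\<alpha> + \<beta>)"] by simp
  have key: "F E v * Suc \<alpha> = F E u * Suc \<beta>"
    unfolding Fv Fu cE sym using Suc_times_binomial_add[of \<alpha> \<beta>] by (simp add: ac_simps)
  have Fupos: "F E u > 0" unfolding Fu cE using GApos GBpos by simp
  have c1: "real (F E v) / real (F E u) = real (Suc \<beta>) / real (Suc \<alpha>)"
  proof -
    have "real (F E v) * real (Suc \<alpha>) = real (F E u) * real (Suc \<beta>)"
      using key by (metis of_nat_mult)
    then show ?thesis using Fupos by (simp add: field_simps)
  qed
  have nV: "n = Suc \<alpha> + Suc \<beta>"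
  proof -
    have "card V = card (side E u v \<union> side E v u)" using side_union[OF T e0] by simp
    also have "\<dots> = card (side E u v) + card (side E v u)"
      using finA[OF T e0] side_disj[OF T e0] by (simp add: card_Un_disjoint)
    finally show ?thesis using assms(2) GS_card(1)[OF T e0] GS_card(1)[OF T e0'] unfolding \<alpha>_def \<beta>_def by simp
  qed
  have c2: "real n - real (Suc \<beta>) = real (Suc \<alpha>)" using nV by simp
  show ?thesis unfolding sa sb c2 using c1 by simp
qed

end
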